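(* Let $G$ be a group of finite rank and $T$ a finite normal subgroup of $G$, and put $Q=G/T$. Then $\alpha_G^*=\alpha_Q^*$ for $*\in\{\leq,\lhd\}$, and $\zeta_{G,p}^*(s)=\zeta_{Q,p}^*(s)$ for every prime $p$ not dividing $|T|$.
   Context: $a_n^{\leq}(G)$ (resp. $a_n^{\lhd}(G)$) is the number of subgroups (resp. normal subgroups) of index $n$ in $G$; $\alpha_G^*:=\inf\{\alpha:\exists c>0\ \forall n\ \sum_{i\le n}a_i^*(G)\le cn^{\alpha}\}$; the local factor at a prime $p$ is $\zeta_{G,p}^*(s)=\sum_{k\ge0}a_{p^k}^*(G)p^{-ks}$. *)

theory Defs
  imports "HOL-Algebra.Algebra" "HOL-Library.Extended_Real"
    "HOL-Computational_Algebra.Formal_Power_Series"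
    "HOL-Computational_Algebra.Primes"
begin

definition finite_rank :: "('a, 'b) monoid_scheme \<Rightarrow> bool" where
  "finite_rank G \<longleftrightarrow> (\<exists>r::nat. \<forall>S. S \<subseteq> carrier G \<and> finite S \<longrightarrow>
      (\<exists>S'. S' \<subseteq> carrier G \<and> finite S' \<and> card S' \<le> r \<and> generate G S' = generate G S))"

datatype subgroup_kind = AllSub | NormalSub

definition counted :: "subgroup_kind \<Rightarrow> 'a set \<Rightarrow> ('a, 'b) monoid_scheme \<Rightarrow> bool" where
  "counted k H G = (case k of AllSub \<Rightarrow> subgroup H G | NormalSub \<Rightarrow> H \<lhd> G)"

definition sub_count :: "('a, 'b) monoid_scheme \<Rightarrow> subgroup_kind \<Rightarrow> nat \<Rightarrow> nat" where
  "sub_count G k n = card {H. counted k H G \<and> card (rcosets\<^bsub>G\<^esub> H) = n}"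

definition growth_alpha :: "('a, 'b) monoid_scheme \<Rightarrow> subgroup_kind \<Rightarrow> ereal" where
  "growth_alpha G k = Inf {ereal a | a. \<exists>c>0. \<forall>n::nat.
      real (\<Sum>i\<in>{1..n}. sub_count G k i) \<le> c * real n powr a}"

text \<open>Local factor at p, as a formal power series in the variable p^(-s).\<close>
definition zeta_local :: "('a, 'b) monoid_scheme \<Rightarrow> subgroup_kind \<Rightarrow> nat \<Rightarrow> nat fps" where
  "zeta_local G k p = Abs_fps (\<lambda>j. sub_count G k (p ^ j))"

end

theory Submission
  imports Defs
begin


lemma card_image_cong_rel:
  assumes "\<And>x y. x \<in> A \<Longrightarrow> y \<in> A \<Longrightarrow> f x = f y \<longleftrightarrow> g x = g y"
  shows "card (f ` A) = card (g ` A)"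
proof -
  define h where "h c = g (inv_into A f c)" for c
  have "bij_betw h (f ` A) (g ` A)"
  proof (rule bij_betw_imageI)
    show "inj_on h (f ` A)"
    proof (rule inj_onI)
      fix c1 c2 assume c: "c1 \<in> f ` A" "c2 \<in> f ` A" "h c1 = h c2"
      have "inv_into A f c1 \<in> A" "inv_into A f c2 \<in> A" using c by (auto intro: inv_into_into)
      moreover have "f (inv_into A f c1) = c1" "f (inv_into A f c2) = c2" using c by (auto intro: f_inv_into_f)
      ultimately show "c1 = c2" using assms c(3) unfolding h_def by metis
    qed
    show "h ` f ` A = g ` A"
    proof
      show "h ` f ` A \<subseteq> g ` A" unfolding h_def by (auto intro!: imageI inv_into_into)
      show "g ` A \<subseteq> h ` f ` A"
      proof
        fix y assume "y \<in> g ` A"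
        then obtain a where a: "a \<in> A" "y = g a" by auto
        have "inv_into A f (f a) \<in> A" "f (inv_into A f (f a)) = f a" using a by (auto intro: inv_into_into f_inv_into_f)
        hence "h (f a) = g a" unfolding h_def using assms a by metis
        thus "y \<in> h ` f ` A" using a by (metis imageI)
      qed
    qed
  qed
  thus ?thesis by (rule bij_betw_same_card)
qed

context group begin

lemma subgroup_mult_left_iff:
  assumes "subgroup H G" "a \<in> H" "b \<in> carrier G"
  shows "a \<otimes> b \<in> H \<longleftrightarrow> b \<in> H"
proof
  assume "a \<otimes> b \<in> H"
  hence "inv a \<otimes> (a \<otimes> b) \<in> H" using assms subgroup.m_inv_closed subgroup.m_closed by metis
  moreover have "inv a \<otimes> (a \<otimes> b) = b" using assms subgroup.mem_carrier
    by (metis inv_solve_left m_closed)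
  ultimately show "b \<in> H" by simp
qed (simp add: subgroup.m_closed[OF assms(1) assms(2)])

lemma subgroup_inv_iff:
  assumes "subgroup H G" "x \<in> carrier G"
  shows "inv x \<in> H \<longleftrightarrow> x \<in> H"
  using assms subgroup.m_inv_closed inv_inv by metis

end


context group begin

lemma inv_cancel_left2: "x \<in> carrier G \<Longrightarrow> y \<in> carrier G \<Longrightarrow> inv x \<otimes> (x \<otimes> y) = y"
  by (simp add: m_assoc[symmetric])

lemma family_bound_fin:
  assumes K: "subgroup K G"
  and rk: "\<forall>S. S \<subseteq> carrier G \<and> finite S \<longrightarrow> (\<exists>S'. S' \<subseteq> carrier G \<and> finite S' \<and> card S' \<le> r \<and> generate G S' = generate G S)"
  and F: "\<And>H. H \<in> F \<Longrightarrow> subgroup H G \<and> H \<subseteq> K \<and> (\<exists>u. u 0 = \<one> \<and> (\<forall>j<n. u j \<in> K) \<and> (\<forall>x\<in>K. \<exists>j<n. x \<otimes> inv (u j) \<in> H))"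
  and finF: "finite F"
  shows "card F \<le> 2 ^ ((r+1)*n*n)"
proof (cases "F = {}")
  case True thus ?thesis by simp
next
  case False
  then obtain H0 where "H0 \<in> F" by auto
  hence "0 < n" using F[of H0] subgroup.one_closed[OF K] by (metis not_less_zero gr0I)
  have "\<forall>H\<in>F. \<exists>u. u 0 = \<one> \<and> (\<forall>j<n. u j \<in> K) \<and> (\<forall>x\<in>K. \<exists>j<n. x \<otimes> inv (u j) \<in> H)"
    using F by blast
  then obtain U where U: "\<And>H. H \<in> F \<Longrightarrow> U H 0 = \<one> \<and> (\<forall>j<n. U H j \<in> K) \<and> (\<forall>x\<in>K. \<exists>j<n. x \<otimes> inv (U H j) \<in> H)"
    by metis
  define P where "P = {p. fst p \<in> F \<and> snd p \<in> F \<and> fst p \<noteq> snd p}"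
  have "\<forall>p\<in>P. \<exists>d. d \<in> K \<and> \<not> (d \<in> fst p \<longleftrightarrow> d \<in> snd p)"
  proof
    fix p assume "p \<in> P"
    hence "fst p \<subseteq> K" "snd p \<subseteq> K" "fst p \<noteq> snd p" using F unfolding P_def by auto
    thus "\<exists>d. d \<in> K \<and> \<not> (d \<in> fst p \<longleftrightarrow> d \<in> snd p)" by blast
  qed
  then obtain D where D: "\<And>p. p \<in> P \<Longrightarrow> D p \<in> K \<and> \<not> (D p \<in> fst p \<longleftrightarrow> D p \<in> snd p)"
    by metis
  define S where "S = D ` P"
  have "P \<subseteq> F \<times> F" unfolding P_def by auto
  hence "finite P" using finF by (meson finite_SigmaI finite_subset)
  hence finS: "finite S" unfolding S_def by simp
  have SK: "S \<subseteq> K" using D unfolding S_def by auto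
  hence "S \<subseteq> carrier G" using subgroup.subset[OF K] by auto
  then obtain S' where S': "S' \<subseteq> carrier G" "finite S'" "card S' \<le> r" "generate G S' = generate G S"
    using rk finS by blast
  have genK: "generate G S \<subseteq> K" using generate_subgroup_incl[OF SK K] .
  have S'K: "S' \<subseteq> K" using S'(4) genK generate.incl[of _ S' G] by blast
  define A where "A = insert \<one> S' \<times> {..<n} \<times> {..<n}"
  define sig where "sig H = {(k,i,j). (k,i,j) \<in> A \<and> U H i \<otimes> k \<otimes> inv (U H j) \<in> H}" for H
  have "inj_on sig F"
  proof (rule inj_onI, rule ccontr)
    fix H1 H2 assume H: "H1 \<in> F" "H2 \<in> F" "sig H1 = sig H2" "H1 \<noteq> H2"
    have sg1: "subgroup H1 G" and sg2: "subgroup H2 G" using F H by auto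
    have U1: "\<And>j. j < n \<Longrightarrow> U H1 j \<in> carrier G" and U2: "\<And>j. j < n \<Longrightarrow> U H2 j \<in> carrier G"
      using U H subgroup.subset[OF K] by blast+
    define E where "E = {k\<in>K. \<forall>i<n. \<forall>j<n. (U H1 i \<otimes> k \<otimes> inv (U H1 j) \<in> H1) \<longleftrightarrow> (U H2 i \<otimes> k \<otimes> inv (U H2 j) \<in> H2)}"
    have base: "k \<in> E" if "k \<in> insert \<one> S'" for k
    proof -
      have "k \<in> K" using that S'K subgroup.one_closed[OF K] by auto
      moreover have "(U H1 i \<otimes> k \<otimes> inv (U H1 j) \<in> H1) \<longleftrightarrow> (U H2 i \<otimes> k \<otimes> inv (U H2 j) \<in> H2)"
        if "i < n" "j < n" for i j
      proof -
        have "(k,i,j) \<in> A" using that \<open>k \<in> insert \<one> S'\<close> unfolding A_def by auto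
        hence "(k,i,j) \<in> sig H1 \<longleftrightarrow> (k,i,j) \<in> sig H2" using H(3) by simp
        thus ?thesis using \<open>(k,i,j) \<in> A\<close> unfolding sig_def by simp
      qed
      ultimately show ?thesis unfolding E_def by blast
    qed
    have invE: "inv k \<in> E" if "k \<in> E" for k
    proof -
      have k: "k \<in> K" "k \<in> carrier G" using that subgroup.subset[OF K] unfolding E_def by auto
      have "inv k \<in> K" using k subgroup.m_inv_closed[OF K] by auto
      moreover have "(U H1 i \<otimes> inv k \<otimes> inv (U H1 j) \<in> H1) \<longleftrightarrow> (U H2 i \<otimes> inv k \<otimes> inv (U H2 j) \<in> H2)"
        if ij: "i < n" "j < n" for i j
      proof -
        have e1: "inv (U H1 i \<otimes> inv k \<otimes> inv (U H1 j)) = U H1 j \<otimes> k \<otimes> inv (U H1 i)"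
          using U1 ij k by (simp add: inv_mult_group m_assoc)
        have e2: "inv (U H2 i \<otimes> inv k \<otimes> inv (U H2 j)) = U H2 j \<otimes> k \<otimes> inv (U H2 i)"
          using U2 ij k by (simp add: inv_mult_group m_assoc)
        have "(U H1 i \<otimes> inv k \<otimes> inv (U H1 j) \<in> H1) \<longleftrightarrow> (U H1 j \<otimes> k \<otimes> inv (U H1 i) \<in> H1)"
          using subgroup_inv_iff[OF sg1, of "U H1 i \<otimes> inv k \<otimes> inv (U H1 j)"] e1 U1 ij k by simp
        also have "\<dots> \<longleftrightarrow> (U H2 j \<otimes> k \<otimes> inv (U H2 i) \<in> H2)" using that \<open>k \<in> E\<close> unfolding E_def by blast
        also have "\<dots> \<longleftrightarrow> (U H2 i \<otimes> inv k \<otimes> inv (U H2 j) \<in> H2)"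
          using subgroup_inv_iff[OF sg2, of "U H2 i \<otimes> inv k \<otimes> inv (U H2 j)"] e2 U2 ij k by simp
        finally show ?thesis .
      qed
      ultimately show ?thesis unfolding E_def by blast
    qed
    have multE: "a \<otimes> b \<in> E" if "a \<in> E" "b \<in> E" for a b
    proof -
      have a: "a \<in> K" "a \<in> carrier G" and b: "b \<in> K" "b \<in> carrier G"
        using that subgroup.subset[OF K] unfolding E_def by auto
      have "a \<otimes> b \<in> K" using a b subgroup.m_closed[OF K] by auto
      moreover have "(U H1 i \<otimes> (a \<otimes> b) \<otimes> inv (U H1 j) \<in> H1) \<longleftrightarrow> (U H2 i \<otimes> (a \<otimes> b) \<otimes> inv (U H2 j) \<in> H2)"
        if ij: "i < n" "j < n" for i j
      proof -
        have "U H1 i \<otimes> a \<in> K" using U H(1) ij a subgroup.m_closed[OF K] by blast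
        then obtain l where l: "l < n" "U H1 i \<otimes> a \<otimes> inv (U H1 l) \<in> H1" using U H(1) by blast
        hence l2: "U H2 i \<otimes> a \<otimes> inv (U H2 l) \<in> H2" using \<open>a \<in> E\<close> ij unfolding E_def by blast
        have id1: "U H1 i \<otimes> (a \<otimes> b) \<otimes> inv (U H1 j) = (U H1 i \<otimes> a \<otimes> inv (U H1 l)) \<otimes> (U H1 l \<otimes> b \<otimes> inv (U H1 j))"
          using U1 ij l a b by (metis m_assoc inv_cancel_left2 inv_closed m_closed)
        have id2: "U H2 i \<otimes> (a \<otimes> b) \<otimes> inv (U H2 j) = (U H2 i \<otimes> a \<otimes> inv (U H2 l)) \<otimes> (U H2 l \<otimes> b \<otimes> inv (U H2 j))"
          using U2 ij l a b by (metis m_assoc inv_cancel_left2 inv_closed m_closed)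
        have "(U H1 i \<otimes> (a \<otimes> b) \<otimes> inv (U H1 j) \<in> H1) \<longleftrightarrow> (U H1 l \<otimes> b \<otimes> inv (U H1 j) \<in> H1)"
          using id1 subgroup_mult_left_iff[OF sg1 l(2)] U1 ij l b by simp
        also have "\<dots> \<longleftrightarrow> (U H2 l \<otimes> b \<otimes> inv (U H2 j) \<in> H2)" using \<open>b \<in> E\<close> ij l unfolding E_def by blast
        also have "\<dots> \<longleftrightarrow> (U H2 i \<otimes> (a \<otimes> b) \<otimes> inv (U H2 j) \<in> H2)"
          using id2 subgroup_mult_left_iff[OF sg2 l2] U2 ij l b by simp
        finally show ?thesis .
      qed
      ultimately show ?thesis unfolding E_def by blast
    qed
    have "generate G S' \<subseteq> E"
    proof
      fix x assume "x \<in> generate G S'"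
      thus "x \<in> E"
      proof induction
        case one thus ?case using base by simp
      next
        case (incl h) thus ?case using base by simp
      next
        case (inv h) thus ?case using base invE by simp
      next
        case (eng h1 h2) thus ?case using multE by simp
      qed
    qed
    moreover have "(H1, H2) \<in> P" using H unfolding P_def by simp
    hence "D (H1,H2) \<in> S" unfolding S_def by simp
    hence "D (H1,H2) \<in> generate G S'" using S'(4) generate.incl[of _ S G] by simp
    ultimately have "D (H1,H2) \<in> E" by blast
    hence "U H1 0 \<otimes> D (H1,H2) \<otimes> inv (U H1 0) \<in> H1 \<longleftrightarrow> U H2 0 \<otimes> D (H1,H2) \<otimes> inv (U H2 0) \<in> H2"
      using \<open>0 < n\<close> unfolding E_def by blast
    moreover have "D (H1,H2) \<in> carrier G" using D[OF \<open>(H1,H2) \<in> P\<close>] subgroup.subset[OF K] by blast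
    ultimately have "D (H1,H2) \<in> H1 \<longleftrightarrow> D (H1,H2) \<in> H2"
      using U[OF H(1)] U[OF H(2)] by simp
    thus False using D[OF \<open>(H1,H2) \<in> P\<close>] by simp
  qed
  hence "card F = card (sig ` F)" by (simp add: card_image)
  also have "\<dots> \<le> card (Pow A)"
  proof (rule card_mono)
    show "finite (Pow A)" unfolding A_def using S'(2) by simp
    show "sig ` F \<subseteq> Pow A" unfolding sig_def by auto
  qed
  also have "\<dots> = 2 ^ card A" using S'(2) unfolding A_def by (simp add: card_Pow)
  also have "\<dots> \<le> 2 ^ ((r+1)*n*n)"
  proof (rule power_increasing)
    have "card (insert \<one> S') \<le> r + 1" using S'(2,3) card_insert_le_m1
      by (metis Suc_eq_plus1 card_insert_if le_SucI not_less_eq_eq)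
    hence "card (insert \<one> S') * (n * n) \<le> (r+1) * (n * n)" by (rule mult_right_mono) simp
    hence "card A \<le> (r+1) * (n * n)" unfolding A_def by (simp only: card_cartesian_product card_lessThan)
    thus "card A \<le> (r+1)*n*n" by (simp only: mult.assoc)
  qed simp
  finally show ?thesis .
qed

lemma family_bound:
  assumes K: "subgroup K G"
  and rk: "\<forall>S. S \<subseteq> carrier G \<and> finite S \<longrightarrow> (\<exists>S'. S' \<subseteq> carrier G \<and> finite S' \<and> card S' \<le> r \<and> generate G S' = generate G S)"
  and F: "\<And>H. H \<in> F \<Longrightarrow> subgroup H G \<and> H \<subseteq> K \<and> (\<exists>u. u 0 = \<one> \<and> (\<forall>j<n. u j \<in> K) \<and> (\<forall>x\<in>K. \<exists>j<n. x \<otimes> inv (u j) \<in> H))"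
  shows "finite F \<and> card F \<le> 2 ^ ((r+1)*n*n)"
proof -
  have fin: "finite F"
  proof (rule ccontr)
    assume "infinite F"
    then obtain F0 where F0: "finite F0" "card F0 = Suc (2 ^ ((r+1)*n*n))" "F0 \<subseteq> F"
      using infinite_arbitrarily_large by blast
    have "card F0 \<le> 2 ^ ((r+1)*n*n)"
      using family_bound_fin[OF K rk, of F0 n] F F0 by blast
    thus False using F0(2) by simp
  qed
  thus ?thesis using family_bound_fin[OF K rk F] by blast
qed

end


context group begin


lemma inv_cancel_left3: "x \<in> carrier G \<Longrightarrow> y \<in> carrier G \<Longrightarrow> x \<otimes> (inv x \<otimes> y) = y"
  by (simp add: m_assoc[symmetric])


lemma rcos_eq_iff:
  assumes "subgroup H G" "x \<in> carrier G" "y \<in> carrier G"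
  shows "H #> x = H #> y \<longleftrightarrow> x \<otimes> inv y \<in> H"
proof
  assume "H #> x = H #> y"
  hence "x \<in> H #> y" using rcos_self[OF assms(2,1)] by simp
  thus "x \<otimes> inv y \<in> H" using subgroup.rcos_module_imp[OF assms(1) is_group assms(3)] by blast
next
  assume "x \<otimes> inv y \<in> H"
  hence "x \<in> H #> y" using subgroup.rcos_module_rev[OF assms(1) is_group assms(3,2)] by blast
  thus "H #> x = H #> y" using repr_independence[OF _ assms(3,1)] by metis
qed

lemma rcosets_eq_image: "rcosets H = (\<lambda>x. H #> x) ` carrier G"
  unfolding RCOSETS_def by auto

lemma KH_coset:
  assumes "subgroup H G" "subgroup K G" "H \<subseteq> K" "x \<in> carrier G"
  shows "K <#> (H #> x) = K #> x"
proof -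
  have "K <#> H = K"
  proof
    show "K <#> H \<subseteq> K" unfolding set_mult_def using assms subgroup.m_closed[OF assms(2)] by blast
    show "K \<subseteq> K <#> H"
    proof
      fix k assume "k \<in> K"
      hence "k = k \<otimes> \<one>" using subgroup.mem_carrier[OF assms(2)] by simp
      thus "k \<in> K <#> H" unfolding set_mult_def using \<open>k \<in> K\<close> subgroup.one_closed[OF assms(1)] by blast
    qed
  qed
  moreover have "K <#> (H #> x) = (K <#> H) #> x"
    using setmult_rcos_assoc assms subgroup.subset by metis
  ultimately show ?thesis by simp
qed

lemma index_mult:
  assumes H: "subgroup H G" and K: "subgroup K G" and HK: "H \<subseteq> K" and fin: "finite (rcosets H)"
  shows "card (rcosets H) = card (rcosets K) * card ((\<lambda>k. H #> k) ` K)"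
proof -
  define f where "f C = K <#> C" for C
  have img: "rcosets K = f ` (rcosets H)"
    unfolding rcosets_eq_image image_image f_def using KH_coset[OF H K HK] by simp
  hence finK: "finite (rcosets K)" using fin by simp
  define fib where "fib B = {C. C \<in> rcosets H \<and> f C = B}" for B
  have U: "rcosets H = (\<Union>B\<in>(rcosets K). fib B)" unfolding fib_def img by auto
  have "card (rcosets H) = (\<Sum>B\<in>(rcosets K). card (fib B))"
    unfolding U by (rule card_UN_disjoint) (use finK fin in \<open>auto simp: fib_def\<close>)
  also have "\<dots> = (\<Sum>B\<in>(rcosets K). card ((\<lambda>k. H #> k) ` K))"
  proof (rule sum.cong[OF refl])
    fix B assume "B \<in> rcosets K"
    then obtain y where y: "y \<in> carrier G" "B = K #> y" unfolding rcosets_eq_image by auto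
    have "fib B = (\<lambda>k. H #> (k \<otimes> y)) ` K"
    proof
      show "fib B \<subseteq> (\<lambda>k. H #> (k \<otimes> y)) ` K"
      proof
        fix C assume "C \<in> fib B"
        then obtain x where x: "x \<in> carrier G" "C = H #> x" "K #> x = K #> y"
          unfolding fib_def rcosets_eq_image f_def using KH_coset[OF H K HK] y by auto
        hence "x \<otimes> inv y \<in> K" using rcos_eq_iff[OF K x(1) y(1)] by simp
        moreover have "(x \<otimes> inv y) \<otimes> y = x" using x y by (simp add: m_assoc)
        ultimately show "C \<in> (\<lambda>k. H #> (k \<otimes> y)) ` K" using x(2) by (metis image_eqI)
      qed
      show "(\<lambda>k. H #> (k \<otimes> y)) ` K \<subseteq> fib B"
      proof
        fix C assume "C \<in> (\<lambda>k. H #> (k \<otimes> y)) ` K"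
        then obtain k where k: "k \<in> K" "C = H #> (k \<otimes> y)" by auto
        have kc: "k \<in> carrier G" using k subgroup.mem_carrier[OF K] by simp
        have "(k \<otimes> y) \<otimes> inv y = k" using kc y by (simp add: m_assoc)
        hence "K #> (k \<otimes> y) = K #> y" using rcos_eq_iff[OF K _ y(1), of "k \<otimes> y"] kc y k by simp
        moreover have "C \<in> rcosets H" using k kc y unfolding rcosets_eq_image by auto
        ultimately show "C \<in> fib B" unfolding fib_def f_def using k KH_coset[OF H K HK, of "k \<otimes> y"] kc y by auto
      qed
    qed
    also have "card \<dots> = card ((\<lambda>k. H #> k) ` K)"
    proof (rule card_image_cong_rel)
      fix k1 k2 assume k: "k1 \<in> K" "k2 \<in> K"
      hence kc: "k1 \<in> carrier G" "k2 \<in> carrier G" using subgroup.mem_carrier[OF K] by auto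
      have "(k1 \<otimes> y) \<otimes> inv (k2 \<otimes> y) = k1 \<otimes> inv k2" using kc y
        by (simp add: inv_mult_group m_assoc inv_cancel_left3)
      thus "H #> (k1 \<otimes> y) = H #> (k2 \<otimes> y) \<longleftrightarrow> H #> k1 = H #> k2"
        using rcos_eq_iff[OF H] kc y by simp
    qed
    finally show "card (fib B) = card ((\<lambda>k. H #> k) ` K)" .
  qed
  also have "\<dots> = card (rcosets K) * card ((\<lambda>k. H #> k) ` K)" by simp
  finally show ?thesis .
qed

lemma supp_subgroup:
  assumes T: "T \<lhd> G" and H: "subgroup H G"
  shows "subgroup (H <#> T) G"
proof -
  interpret second_isomorphism_grp T G H using T H unfolding second_isomorphism_grp_def second_isomorphism_grp_axioms_def by simp
  have "subgroup (T <#> H) G" by (rule normal_set_mult_subgroup)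
  thus ?thesis using commut_normal[OF H T] by simp
qed

lemma supp_basic:
  assumes T: "T \<lhd> G" and H: "subgroup H G"
  shows "H \<subseteq> H <#> T" "T \<subseteq> H <#> T" "\<And>x. x \<in> H <#> T \<Longrightarrow> \<exists>t\<in>T. x \<otimes> inv t \<in> H"
    "(\<lambda>k. H #> k) ` (H <#> T) = (\<lambda>t. H #> t) ` T"
proof -
  have Ts: "subgroup T G" using T normal_imp_subgroup by blast
  show "H \<subseteq> H <#> T"
  proof
    fix h assume "h \<in> H"
    hence "h = h \<otimes> \<one>" using subgroup.mem_carrier[OF H] by simp
    thus "h \<in> H <#> T" unfolding set_mult_def using \<open>h \<in> H\<close> subgroup.one_closed[OF Ts] by blast
  qed
  show "T \<subseteq> H <#> T"
  proof
    fix h assume "h \<in> T"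
    hence "h = \<one> \<otimes> h" using subgroup.mem_carrier[OF Ts] by simp
    thus "h \<in> H <#> T" unfolding set_mult_def using \<open>h \<in> T\<close> subgroup.one_closed[OF H] by blast
  qed
  show ex: "\<exists>t\<in>T. x \<otimes> inv t \<in> H" if xin: "x \<in> H <#> T" for x
  proof -
    obtain h t where ht: "h \<in> H" "t \<in> T" "x = h \<otimes> t" using xin unfolding set_mult_def by blast
    hence "x \<otimes> inv t = h" using subgroup.mem_carrier[OF H] subgroup.mem_carrier[OF Ts]
      by (simp add: m_assoc)
    thus ?thesis using ht by blast
  qed
  show "(\<lambda>k. H #> k) ` (H <#> T) = (\<lambda>t. H #> t) ` T"
  proof
    show "(\<lambda>t. H #> t) ` T \<subseteq> (\<lambda>k. H #> k) ` (H <#> T)" using \<open>T \<subseteq> H <#> T\<close> by auto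
    show "(\<lambda>k. H #> k) ` (H <#> T) \<subseteq> (\<lambda>t. H #> t) ` T"
    proof
      fix C assume "C \<in> (\<lambda>k. H #> k) ` (H <#> T)"
      then obtain x where x: "x \<in> H <#> T" "C = H #> x" by auto
      then obtain t where t: "t \<in> T" "x \<otimes> inv t \<in> H" using ex by blast
      have "x \<in> carrier G" using x(1) supp_subgroup[OF T H] subgroup.mem_carrier by metis
      hence "H #> x = H #> t" using rcos_eq_iff[OF H] t subgroup.mem_carrier[OF Ts] by simp
      thus "C \<in> (\<lambda>t. H #> t) ` T" using x t by simp
    qed
  qed
qed

lemma supp_index_dvd:
  assumes T: "T \<lhd> G" and H: "subgroup H G" and fT: "finite T"
  shows "card ((\<lambda>t. H #> t) ` T) dvd card T" "1 \<le> card ((\<lambda>t. H #> t) ` T)"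
    "card ((\<lambda>t. H #> t) ` T) \<le> card T"
proof -
  have Ts: "subgroup T G" using T normal_imp_subgroup by blast
  have TH: "subgroup (T \<inter> H) G" using subgroups_Inter_pair[OF Ts H] .
  have gT: "group (G\<lparr>carrier := T\<rparr>)" using subgroup.subgroup_is_group[OF Ts is_group] .
  have sTH: "subgroup (T \<inter> H) (G\<lparr>carrier := T\<rparr>)" using subgroup_incl[OF TH Ts] by simp
  have "card (rcosets\<^bsub>G\<lparr>carrier := T\<rparr>\<^esub> (T \<inter> H)) * card (T \<inter> H) = order (G\<lparr>carrier := T\<rparr>)"
    using group.lagrange[OF gT sTH] .
  moreover have "rcosets\<^bsub>G\<lparr>carrier := T\<rparr>\<^esub> (T \<inter> H) = (\<lambda>t. (T \<inter> H) #> t) ` T"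
    unfolding RCOSETS_def by auto
  moreover have "card ((\<lambda>t. (T \<inter> H) #> t) ` T) = card ((\<lambda>t. H #> t) ` T)"
  proof (rule card_image_cong_rel)
    fix x y assume xy: "x \<in> T" "y \<in> T"
    hence c: "x \<in> carrier G" "y \<in> carrier G" using subgroup.mem_carrier[OF Ts] by auto
    have "x \<otimes> inv y \<in> T" using xy subgroup.m_closed[OF Ts] subgroup.m_inv_closed[OF Ts] by blast
    thus "(T \<inter> H) #> x = (T \<inter> H) #> y \<longleftrightarrow> H #> x = H #> y"
      using rcos_eq_iff[OF TH c] rcos_eq_iff[OF H c] by simp
  qed
  ultimately have eq: "card ((\<lambda>t. H #> t) ` T) * card (T \<inter> H) = card T"
    unfolding order_def by simp
  thus "card ((\<lambda>t. H #> t) ` T) dvd card T" by (metis dvd_triv_left)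
  have "T \<noteq> {}" using subgroup.one_closed[OF Ts] by blast
  thus "1 \<le> card ((\<lambda>t. H #> t) ` T)" using fT by (simp add: Suc_le_eq card_gt_0_iff)
  show "card ((\<lambda>t. H #> t) ` T) \<le> card T" using fT by (rule card_image_le)
qed

lemma supp_normal:
  assumes T: "T \<lhd> G" and H: "H \<lhd> G"
  shows "(H <#> T) \<lhd> G"
proof -
  have Hs: "subgroup H G" using H normal_imp_subgroup by blast
  show ?thesis
  proof (rule normal_invI[OF supp_subgroup[OF T Hs]])
    fix x k assume x: "x \<in> carrier G" and k: "k \<in> H <#> T"
    obtain h t where ht: "h \<in> H" "t \<in> T" "k = h \<otimes> t" using k unfolding set_mult_def by blast
    have hc: "h \<in> carrier G" and tc: "t \<in> carrier G" using ht H T normal_imp_subgroup subgroup.mem_carrier by metis+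
    have "x \<otimes> k \<otimes> inv x = (x \<otimes> h \<otimes> inv x) \<otimes> (x \<otimes> t \<otimes> inv x)"
      using x hc tc ht(3) by (simp add: m_assoc inv_cancel_left2)
    moreover have "x \<otimes> h \<otimes> inv x \<in> H" using normal_invE(2)[OF H] x ht by blast
    moreover have "x \<otimes> t \<otimes> inv x \<in> T" using normal_invE(2)[OF T] x ht by blast
    ultimately show "x \<otimes> k \<otimes> inv x \<in> H <#> T" unfolding set_mult_def by blast
  qed
qed

end


context group begin

lemma pi_hom:
  assumes T: "T \<lhd> G"
  shows "group_hom G (G Mod T) (\<lambda>x. T #> x)"
  unfolding group_hom_def group_hom_axioms_def
  using normal.factorgroup_is_group[OF T] normal.r_coset_hom_Mod[OF T] is_group by blast

lemma img_mem:
  assumes T: "T \<lhd> G" and K: "subgroup K G" and TK: "T \<subseteq> K" and z: "z \<in> carrier G"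
  shows "T #> z \<in> (\<lambda>x. T #> x) ` K \<longleftrightarrow> z \<in> K"
proof
  assume "T #> z \<in> (\<lambda>x. T #> x) ` K"
  then obtain k where k: "k \<in> K" "T #> z = T #> k" by auto
  have kc: "k \<in> carrier G" using k subgroup.mem_carrier[OF K] by simp
  have Ts: "subgroup T G" using T normal_imp_subgroup by blast
  have "z \<otimes> inv k \<in> K" using rcos_eq_iff[OF Ts z kc] k TK by blast
  hence "(z \<otimes> inv k) \<otimes> k \<in> K" using k subgroup.m_closed[OF K] by blast
  moreover have "(z \<otimes> inv k) \<otimes> k = z" using z kc by (simp add: m_assoc)
  ultimately show "z \<in> K" by simp
qed auto

lemma union_img:
  assumes T: "T \<lhd> G" and K: "subgroup K G" and TK: "T \<subseteq> K"
  shows "\<Union> ((\<lambda>x. T #> x) ` K) = K"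
proof
  have Ts: "subgroup T G" using T normal_imp_subgroup by blast
  show "\<Union> ((\<lambda>x. T #> x) ` K) \<subseteq> K"
  proof
    fix y assume "y \<in> \<Union> ((\<lambda>x. T #> x) ` K)"
    then obtain x t where "x \<in> K" "t \<in> T" "y = t \<otimes> x" unfolding r_coset_def by blast
    thus "y \<in> K" using TK subgroup.m_closed[OF K] by blast
  qed
  show "K \<subseteq> \<Union> ((\<lambda>x. T #> x) ` K)"
    using rcos_self[OF _ Ts] subgroup.mem_carrier[OF K] by blast
qed

lemma img_index:
  assumes T: "T \<lhd> G" and K: "subgroup K G" and TK: "T \<subseteq> K"
  shows "card (rcosets\<^bsub>G Mod T\<^esub> ((\<lambda>x. T #> x) ` K)) = card (rcosets K)"
proof -
  interpret \<pi>: group_hom G "G Mod T" "\<lambda>x. T #> x" using pi_hom[OF T] .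
  have Q: "group (G Mod T)" using normal.factorgroup_is_group[OF T] .
  have sA: "subgroup ((\<lambda>x. T #> x) ` K) (G Mod T)" using \<pi>.subgroup_img_is_subgroup[OF K] .
  have "rcosets\<^bsub>G Mod T\<^esub> ((\<lambda>x. T #> x) ` K)
     = (\<lambda>x. ((\<lambda>x. T #> x) ` K) #>\<^bsub>G Mod T\<^esub> (T #> x)) ` carrier G"
    unfolding group.rcosets_eq_image[OF Q] carrier_FactGroup image_image by simp
  moreover have "card ((\<lambda>x. ((\<lambda>x. T #> x) ` K) #>\<^bsub>G Mod T\<^esub> (T #> x)) ` carrier G) = card ((\<lambda>x. K #> x) ` carrier G)"
  proof (rule card_image_cong_rel)
    fix x y assume xy: "x \<in> carrier G" "y \<in> carrier G"
    have pc: "T #> x \<in> carrier (G Mod T)" "T #> y \<in> carrier (G Mod T)" using xy unfolding carrier_FactGroup by auto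
    have e: "(T #> x) \<otimes>\<^bsub>G Mod T\<^esub> inv\<^bsub>G Mod T\<^esub> (T #> y) = T #> (x \<otimes> inv y)"
      using xy \<pi>.hom_mult[of x "inv y"] \<pi>.hom_inv[of y] inv_closed[of y] by metis
    have s1: "((\<lambda>x. T #> x) ` K) #>\<^bsub>G Mod T\<^esub> (T #> x) = ((\<lambda>x. T #> x) ` K) #>\<^bsub>G Mod T\<^esub> (T #> y)
       \<longleftrightarrow> (T #> x) \<otimes>\<^bsub>G Mod T\<^esub> inv\<^bsub>G Mod T\<^esub> (T #> y) \<in> (\<lambda>x. T #> x) ` K"
      by (rule group.rcos_eq_iff[OF Q sA pc])
    have s2: "T #> (x \<otimes> inv y) \<in> (\<lambda>x. T #> x) ` K \<longleftrightarrow> x \<otimes> inv y \<in> K"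
      by (rule img_mem[OF T K TK m_closed[OF xy(1) inv_closed[OF xy(2)]]])
    have s3: "x \<otimes> inv y \<in> K \<longleftrightarrow> K #> x = K #> y" using rcos_eq_iff[OF K xy] by simp
    show "((\<lambda>x. T #> x) ` K) #>\<^bsub>G Mod T\<^esub> (T #> x) = ((\<lambda>x. T #> x) ` K) #>\<^bsub>G Mod T\<^esub> (T #> y)
       \<longleftrightarrow> K #> x = K #> y" using s1 s2 s3 e by (simp only:)
  qed
  ultimately show ?thesis unfolding rcosets_eq_image by simp
qed

lemma union_props:
  assumes T: "T \<lhd> G" and A: "subgroup A (G Mod T)"
  shows "subgroup (\<Union>A) G" "T \<subseteq> \<Union>A" "(\<lambda>x. T #> x) ` (\<Union>A) = A"
proof -
  show "subgroup (\<Union>A) G" using normal.factgroup_subgroup_union_subgroup[OF T A] .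
  have "\<one>\<^bsub>G Mod T\<^esub> \<in> A" using subgroup.one_closed[OF A] .
  thus "T \<subseteq> \<Union>A" by auto
  have "A = rcosets\<^bsub>G\<lparr>carrier := \<Union>A\<rparr>\<^esub> T" using normal.factgroup_subgroup_union_factor[OF T A] .
  also have "\<dots> = (\<lambda>x. T #> x) ` (\<Union>A)" unfolding RCOSETS_def by auto
  finally show "(\<lambda>x. T #> x) ` (\<Union>A) = A" by simp
qed

lemma sub_count_quot:
  assumes T: "T \<lhd> G"
  shows "sub_count (G Mod T) k m = card {K. counted k K G \<and> T \<subseteq> K \<and> card (rcosets K) = m}"
proof -
  interpret \<pi>: group_hom G "G Mod T" "\<lambda>x. T #> x" using pi_hom[OF T] .
  have surj: "(\<lambda>x. T #> x) ` carrier G = carrier (G Mod T)" unfolding carrier_FactGroup by simp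
  have cs: "counted k K G \<Longrightarrow> subgroup K G" for K
    unfolding counted_def by (cases k) (auto intro: normal_imp_subgroup)
  have csQ: "counted k A (G Mod T) \<Longrightarrow> subgroup A (G Mod T)" for A
    unfolding counted_def by (cases k) (auto intro: normal_imp_subgroup)
  have "bij_betw (\<lambda>K. (\<lambda>x. T #> x) ` K) {K. counted k K G \<and> T \<subseteq> K \<and> card (rcosets K) = m}
     {A. counted k A (G Mod T) \<and> card (rcosets\<^bsub>G Mod T\<^esub> A) = m}"
  proof (rule bij_betw_byWitness[where f'=Union])
    show "\<forall>a\<in>{K. counted k K G \<and> T \<subseteq> K \<and> card (rcosets K) = m}. \<Union> ((\<lambda>x. T #> x) ` a) = a"
      using union_img[OF T] cs by blast
    show "\<forall>a'\<in>{A. counted k A (G Mod T) \<and> card (rcosets\<^bsub>G Mod T\<^esub> A) = m}. (\<lambda>x. T #> x) ` (\<Union>a') = a'"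
      using union_props(3)[OF T] csQ by blast
    show "(\<lambda>K. (\<lambda>x. T #> x) ` K) ` {K. counted k K G \<and> T \<subseteq> K \<and> card (rcosets K) = m}
      \<subseteq> {A. counted k A (G Mod T) \<and> card (rcosets\<^bsub>G Mod T\<^esub> A) = m}"
    proof
      fix A assume "A \<in> (\<lambda>K. (\<lambda>x. T #> x) ` K) ` {K. counted k K G \<and> T \<subseteq> K \<and> card (rcosets K) = m}"
      then obtain K where K: "counted k K G" "T \<subseteq> K" "card (rcosets K) = m" "A = (\<lambda>x. T #> x) ` K" by auto
      have "counted k A (G Mod T)"
      proof (cases k)
        case AllSub thus ?thesis using K \<pi>.subgroup_img_is_subgroup unfolding counted_def by simp
      next
        case NormalSub thus ?thesis using K normal.surj_hom_normal_subgroup[OF _ pi_hom[OF T] surj]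
          unfolding counted_def by simp
      qed
      moreover have "card (rcosets\<^bsub>G Mod T\<^esub> A) = m" using img_index[OF T cs[OF K(1)] K(2)] K by simp
      ultimately show "A \<in> {A. counted k A (G Mod T) \<and> card (rcosets\<^bsub>G Mod T\<^esub> A) = m}" by simp
    qed
    show "Union ` {A. counted k A (G Mod T) \<and> card (rcosets\<^bsub>G Mod T\<^esub> A) = m}
      \<subseteq> {K. counted k K G \<and> T \<subseteq> K \<and> card (rcosets K) = m}"
    proof
      fix K assume "K \<in> Union ` {A. counted k A (G Mod T) \<and> card (rcosets\<^bsub>G Mod T\<^esub> A) = m}"
      then obtain A where A: "counted k A (G Mod T)" "card (rcosets\<^bsub>G Mod T\<^esub> A) = m" "K = \<Union>A" by auto
      note up = union_props[OF T csQ[OF A(1)]]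
      have "counted k K G"
      proof (cases k)
        case AllSub thus ?thesis using up A unfolding counted_def by simp
      next
        case NormalSub thus ?thesis using A normal.factgroup_subgroup_union_normal[OF T]
          unfolding counted_def by simp
      qed
      moreover have "card (rcosets K) = m" using img_index[OF T up(1) up(2)] up(3) A by simp
      ultimately show "K \<in> {K. counted k K G \<and> T \<subseteq> K \<and> card (rcosets K) = m}" using up A by simp
    qed
  qed
  thus ?thesis unfolding sub_count_def by (simp add: bij_betw_same_card)
qed

end


context group begin

lemma transversal_u:
  assumes K: "subgroup K G" and Xs: "Xs \<subseteq> K" "finite Xs" "card Xs \<le> m"
    and tr: "\<forall>x\<in>K. \<exists>v\<in>Xs. x \<otimes> inv v \<in> H"
  shows "\<exists>u. u 0 = \<one> \<and> (\<forall>j<m+1. u j \<in> K) \<and> (\<forall>x\<in>K. \<exists>j<m+1. x \<otimes> inv (u j) \<in> H)"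
proof -
  obtain h where h: "bij_betw h {0..<card Xs} Xs" using ex_bij_betw_nat_finite[OF Xs(2)] by blast
  define u where "u j = (if 0 < j \<and> j \<le> card Xs then h (j - 1) else \<one>)" for j
  have "u 0 = \<one>" by (simp add: u_def)
  moreover have "\<forall>j<m+1. u j \<in> K"
  proof (intro allI impI)
    fix j assume "j < m+1"
    show "u j \<in> K"
    proof (cases "0 < j \<and> j \<le> card Xs")
      case True
      hence "h (j - 1) \<in> Xs" using bij_betwE[OF h] by auto
      thus ?thesis using True Xs(1) unfolding u_def by auto
    next
      case False thus ?thesis unfolding u_def using subgroup.one_closed[OF K] by auto
    qed
  qed
  moreover have "\<forall>x\<in>K. \<exists>j<m+1. x \<otimes> inv (u j) \<in> H"
  proof
    fix x assume "x \<in> K"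
    then obtain v where v: "v \<in> Xs" "x \<otimes> inv v \<in> H" using tr by blast
    then obtain i where i: "i < card Xs" "v = h i" using h unfolding bij_betw_def by (metis atLeastLessThan_iff imageE)
    have "u (i+1) = v" using i unfolding u_def by simp
    moreover have "i + 1 < m + 1" using i Xs(3) by simp
    ultimately show "\<exists>j<m+1. x \<otimes> inv (u j) \<in> H" using v by metis
  qed
  ultimately show ?thesis by blast
qed

lemma counted_subgroup: "counted k H G \<Longrightarrow> subgroup H G"
  unfolding counted_def by (cases k) (auto intro: normal_imp_subgroup)

lemma fin_FG:
  assumes rk: "\<forall>S. S \<subseteq> carrier G \<and> finite S \<longrightarrow> (\<exists>S'. S' \<subseteq> carrier G \<and> finite S' \<and> card S' \<le> r \<and> generate G S' = generate G S)"
    and n: "1 \<le> n"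
  shows "finite {H. counted k H G \<and> card (rcosets H) = n}"
proof -
  have "finite {H. counted k H G \<and> card (rcosets H) = n} \<and> card {H. counted k H G \<and> card (rcosets H) = n} \<le> 2 ^ ((r+1)*(n+1)*(n+1))"
  proof (rule family_bound[OF subgroup_self rk])
    fix H assume "H \<in> {H. counted k H G \<and> card (rcosets H) = n}"
    hence H: "subgroup H G" "card (rcosets H) = n" using counted_subgroup by auto
    hence finR: "finite (rcosets H)" using n card.infinite by fastforce
    define Xs where "Xs = (\<lambda>C. SOME x. x \<in> C) ` (rcosets H)"
    have mem: "(SOME z. z \<in> H #> x) \<in> H #> x" if "x \<in> carrier G" for x
      using rcos_self[OF that H(1)] by (rule someI)
    have "Xs \<subseteq> carrier G"
    proof
      fix v assume "v \<in> Xs"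
      then obtain x where x: "x \<in> carrier G" "v = (SOME z. z \<in> H #> x)" unfolding Xs_def rcosets_eq_image by auto
      thus "v \<in> carrier G" using mem[OF x(1)] r_coset_subset_G[OF subgroup.subset[OF H(1)] x(1)] by auto
    qed
    moreover have "finite Xs" unfolding Xs_def using finR by simp
    moreover have "card Xs \<le> n" unfolding Xs_def using card_image_le[OF finR] H(2) by simp
    moreover have "\<forall>x\<in>carrier G. \<exists>v\<in>Xs. x \<otimes> inv v \<in> H"
    proof
      fix x assume x: "x \<in> carrier G"
      define v where "v = (SOME z. z \<in> H #> x)"
      have vX: "v \<in> Xs" unfolding Xs_def v_def rcosets_eq_image using x by auto
      have vc: "v \<in> carrier G" using vX \<open>Xs \<subseteq> carrier G\<close> by auto
      have "v \<otimes> inv x \<in> H" using subgroup.rcos_module_imp[OF H(1) is_group x] mem[OF x] unfolding v_def by blast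
      hence "inv (v \<otimes> inv x) \<in> H" using subgroup.m_inv_closed[OF H(1)] by blast
      moreover have "inv (v \<otimes> inv x) = x \<otimes> inv v" using x vc by (simp add: inv_mult_group)
      ultimately show "\<exists>v\<in>Xs. x \<otimes> inv v \<in> H" using vX by metis
    qed
    ultimately have "\<exists>u. u 0 = \<one> \<and> (\<forall>j<n+1. u j \<in> carrier G) \<and> (\<forall>x\<in>carrier G. \<exists>j<n+1. x \<otimes> inv (u j) \<in> H)"
      using transversal_u[OF subgroup_self] by blast
    thus "subgroup H G \<and> H \<subseteq> carrier G \<and> (\<exists>u. u 0 = \<one> \<and> (\<forall>j<n+1. u j \<in> carrier G) \<and> (\<forall>x\<in>carrier G. \<exists>j<n+1. x \<otimes> inv (u j) \<in> H))"
      using H(1) subgroup.subset by blast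
  qed
  thus ?thesis by blast
qed

lemma supp_bound:
  assumes rk: "\<forall>S. S \<subseteq> carrier G \<and> finite S \<longrightarrow> (\<exists>S'. S' \<subseteq> carrier G \<and> finite S' \<and> card S' \<le> r \<and> generate G S' = generate G S)"
    and T: "T \<lhd> G" and fT: "finite T" and K0: "subgroup K0 G"
  shows "finite {H. subgroup H G \<and> H <#> T = K0} \<and> card {H. subgroup H G \<and> H <#> T = K0} \<le> 2 ^ ((r+1)*(card T+1)*(card T+1))"
proof (rule family_bound[OF K0 rk])
  fix H assume "H \<in> {H. subgroup H G \<and> H <#> T = K0}"
  hence H: "subgroup H G" "H <#> T = K0" by auto
  note sb = supp_basic[OF T H(1)]
  have "\<exists>u. u 0 = \<one> \<and> (\<forall>j<card T+1. u j \<in> K0) \<and> (\<forall>x\<in>K0. \<exists>j<card T+1. x \<otimes> inv (u j) \<in> H)"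
    using transversal_u[OF K0 _ fT le_refl] sb(2,3) H(2) by blast
  thus "subgroup H G \<and> H \<subseteq> K0 \<and> (\<exists>u. u 0 = \<one> \<and> (\<forall>j<card T+1. u j \<in> K0) \<and> (\<forall>x\<in>K0. \<exists>j<card T+1. x \<otimes> inv (u j) \<in> H))"
    using H sb(1) by blast
qed

lemma main_ineq:
  assumes rk: "\<forall>S. S \<subseteq> carrier G \<and> finite S \<longrightarrow> (\<exists>S'. S' \<subseteq> carrier G \<and> finite S' \<and> card S' \<le> r \<and> generate G S' = generate G S)"
    and T: "T \<lhd> G" and fT: "finite T" and n: "1 \<le> n"
  shows "sub_count G k n \<le> 2 ^ ((r+1)*(card T+1)*(card T+1)) *
     (\<Sum>s\<in>{s\<in>{1..card T}. s dvd n}. card {K. counted k K G \<and> T \<subseteq> K \<and> card (rcosets K) = n div s})"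
proof -
  define B where "B = (2::nat) ^ ((r+1)*(card T+1)*(card T+1))"
  define FT where "FT m = {K. counted k K G \<and> T \<subseteq> K \<and> card (rcosets K) = m}" for m
  define Sp where "Sp K0 = {H. subgroup H G \<and> H <#> T = K0}" for K0
  define SS where "SS = {s\<in>{1..card T}. s dvd n}"
  have sub: "{H. counted k H G \<and> card (rcosets H) = n} \<subseteq> (\<Union>s\<in>SS. \<Union>K0\<in>FT (n div s). Sp K0)"
  proof
    fix H assume "H \<in> {H. counted k H G \<and> card (rcosets H) = n}"
    hence Hc: "counted k H G" and Hn: "card (rcosets H) = n" by auto
    have H: "subgroup H G" using counted_subgroup[OF Hc] .
    hence finR: "finite (rcosets H)" using n Hn card.infinite by fastforce
    define K0 where "K0 = H <#> T"
    have K0s: "subgroup K0 G" unfolding K0_def using supp_subgroup[OF T H] .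
    note sb = supp_basic[OF T H]
    note sd = supp_index_dvd[OF T H fT]
    define s where "s = card ((\<lambda>t. H #> t) ` T)"
    have im: "n = card (rcosets K0) * s"
      using index_mult[OF H K0s _ finR] sb(1,4) Hn unfolding K0_def s_def by simp
    have "s \<in> SS" unfolding SS_def using sd im unfolding s_def by auto
    moreover have "n div s = card (rcosets K0)" using im sd(2) unfolding s_def by simp
    moreover have "counted k K0 G"
    proof (cases k)
      case AllSub thus ?thesis using K0s unfolding counted_def by simp
    next
      case NormalSub thus ?thesis using Hc supp_normal[OF T] unfolding counted_def K0_def by simp
    qed
    ultimately have "K0 \<in> FT (n div s)" unfolding FT_def K0_def using sb(2) by simp
    moreover have "H \<in> Sp K0" unfolding Sp_def K0_def using H by simp
    ultimately show "H \<in> (\<Union>s\<in>SS. \<Union>K0\<in>FT (n div s). Sp K0)" using \<open>s \<in> SS\<close> by blast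
  qed
  have finSS: "finite SS" unfolding SS_def by simp
  have finFT: "finite (FT (n div s))" if "s \<in> SS" for s
  proof -
    have "s \<le> n" "s \<ge> 1" "s dvd n" using that n unfolding SS_def by (auto intro: dvd_imp_le)
    hence "0 < n div s" by (simp add: div_greater_zero_iff)
    hence "1 \<le> n div s" by simp
    hence "finite {H. counted k H G \<and> card (rcosets H) = n div s}" using fin_FG[OF rk] by blast
    thus ?thesis unfolding FT_def by (rule finite_subset[rotated]) auto
  qed
  have "sub_count G k n = card {H. counted k H G \<and> card (rcosets H) = n}" unfolding sub_count_def by simp
  also have "\<dots> \<le> card (\<Union>s\<in>SS. \<Union>K0\<in>FT (n div s). Sp K0)"
  proof (rule card_mono[OF _ sub])
    show "finite (\<Union>s\<in>SS. \<Union>K0\<in>FT (n div s). Sp K0)"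
      using finSS finFT supp_bound[OF rk T fT] counted_subgroup unfolding Sp_def FT_def by blast
  qed
  also have "\<dots> \<le> (\<Sum>s\<in>SS. card (\<Union>K0\<in>FT (n div s). Sp K0))" by (rule card_UN_le[OF finSS])
  also have "\<dots> \<le> (\<Sum>s\<in>SS. B * card (FT (n div s)))"
  proof (rule sum_mono)
    fix s assume s: "s \<in> SS"
    have "card (\<Union>K0\<in>FT (n div s). Sp K0) \<le> (\<Sum>K0\<in>FT (n div s). card (Sp K0))" by (rule card_UN_le[OF finFT[OF s]])
    also have "\<dots> \<le> (\<Sum>K0\<in>FT (n div s). B)"
      by (rule sum_mono) (use supp_bound[OF rk T fT] counted_subgroup in \<open>auto simp: Sp_def FT_def B_def\<close>)
    also have "\<dots> = B * card (FT (n div s))" by simp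
    finally show "card (\<Union>K0\<in>FT (n div s). Sp K0) \<le> B * card (FT (n div s))" .
  qed
  also have "\<dots> = B * (\<Sum>s\<in>SS. card (FT (n div s)))" by (simp add: sum_distrib_left)
  finally show ?thesis unfolding B_def FT_def SS_def .
qed

lemma contain_T:
  assumes T: "T \<lhd> G" and fT: "finite T" and H: "subgroup H G" and p: "Factorial_Ring.prime (p::nat)"
    and np: "\<not> p dvd card T" and Hn: "card (rcosets H) = p ^ j"
  shows "T \<subseteq> H"
proof -
  have "p > 0" using p by (simp add: prime_gt_0_nat)
  hence finR: "finite (rcosets H)" using Hn card.infinite by fastforce
  define K0 where "K0 = H <#> T"
  have K0s: "subgroup K0 G" unfolding K0_def using supp_subgroup[OF T H] .
  note sb = supp_basic[OF T H]
  note sd = supp_index_dvd[OF T H fT]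
  define s where "s = card ((\<lambda>t. H #> t) ` T)"
  have im: "p ^ j = card (rcosets K0) * s"
    using index_mult[OF H K0s _ finR] sb(1,4) Hn unfolding K0_def s_def by simp
  hence "s dvd p ^ j" by simp
  then obtain i where i: "i \<le> j" "s = p ^ i" using divides_primepow_nat[OF p] by blast
  have "i = 0"
  proof (rule ccontr)
    assume "i \<noteq> 0"
    hence "p dvd s" using i by simp
    hence "p dvd card T" using sd(1) unfolding s_def by (rule dvd_trans)
    thus False using np by simp
  qed
  hence s1: "card ((\<lambda>t. H #> t) ` T) = 1" using i unfolding s_def by simp
  have Ts: "subgroup T G" using T normal_imp_subgroup by blast
  show "T \<subseteq> H"
  proof
    fix t assume t: "t \<in> T"
    have "H #> t = H #> \<one>" using s1 t subgroup.one_closed[OF Ts] by (metis card_1_singletonE imageI singletonD)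
    hence "t \<otimes> inv \<one> \<in> H" using rcos_eq_iff[OF H] t subgroup.mem_carrier[OF Ts] by simp
    thus "t \<in> H" using t subgroup.mem_carrier[OF Ts] by simp
  qed
qed

end

lemma sum_div_bound:
  fixes c :: "nat \<Rightarrow> nat" assumes s: "1 \<le> s"
  shows "(\<Sum>n=1..N. if s dvd n then c (n div s) else 0) \<le> (\<Sum>j=1..N. c j)"
proof -
  have "(\<Sum>n=1..N. if s dvd n then c (n div s) else 0) = (\<Sum>n\<in>{n\<in>{1..N}. s dvd n}. c (n div s))"
    by (rule sum.inter_filter[symmetric]) simp
  also have "\<dots> = (\<Sum>j\<in>(\<lambda>n. n div s) ` {n\<in>{1..N}. s dvd n}. c j)"
  proof (rule sum.reindex[symmetric, unfolded comp_def])
    show "inj_on (\<lambda>n. n div s) {n \<in> {1..N}. s dvd n}"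
      by (rule inj_onI) (auto elim!: dvdE simp: s)
  qed
  also have "\<dots> \<le> (\<Sum>j=1..N. c j)"
  proof (rule sum_mono2)
    show "(\<lambda>n. n div s) ` {n \<in> {1..N}. s dvd n} \<subseteq> {1..N}"
    proof
      fix j assume "j \<in> (\<lambda>n. n div s) ` {n \<in> {1..N}. s dvd n}"
      then obtain n where nn: "n \<in> {1..N}" "s dvd n" "j = n div s" by auto
      have "j \<le> n" using nn(3) by simp
      moreover have "s \<le> n" using nn dvd_imp_le by auto
      hence "0 < j" using nn(3) s by (simp add: div_greater_zero_iff)
      ultimately show "j \<in> {1..N}" using nn(1) by auto
    qed
  qed auto
  finally show ?thesis .
qed



theorem lemma5p2:
  fixes G :: "('a, 'b) monoid_scheme" and T :: "'a set"
  assumes "group G" and "finite_rank G" and "T \<lhd> G" and "finite T"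
  shows "\<forall>k. growth_alpha G k = growth_alpha (G Mod T) k \<and>
           (\<forall>p::nat. Factorial_Ring.prime p \<and> \<not> p dvd card T \<longrightarrow> zeta_local G k p = zeta_local (G Mod T) k p)"
proof -
  interpret G: group G by fact
  note T = assms(3) and fT = assms(4)
  obtain r where rk: "\<forall>S. S \<subseteq> carrier G \<and> finite S \<longrightarrow> (\<exists>S'. S' \<subseteq> carrier G \<and> finite S' \<and> card S' \<le> r \<and> generate G S' = generate G S)"
    using assms(2) unfolding finite_rank_def by blast
  define t where "t = card T"
  define B where "B = (2::nat) ^ ((r+1)*(card T+1)*(card T+1))"
  have Ts: "subgroup T G" using T normal_imp_subgroup by blast
  have "T \<noteq> {}" using subgroup.one_closed[OF Ts] by blast
  hence t1: "1 \<le> t" unfolding t_def using fT by (simp add: Suc_le_eq card_gt_0_iff)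
  have B1: "1 \<le> B" unfolding B_def by simp
  show ?thesis
  proof (intro allI conjI impI)
    fix k
    have cQ_eq: "sub_count (G Mod T) k n = card {K. counted k K G \<and> T \<subseteq> K \<and> card (rcosets\<^bsub>G\<^esub> K) = n}" for n
      using G.sub_count_quot[OF T] .
    have low: "sub_count (G Mod T) k n \<le> sub_count G k n" if "1 \<le> n" for n
    proof -
      have "sub_count (G Mod T) k n = card {K. counted k K G \<and> T \<subseteq> K \<and> card (rcosets\<^bsub>G\<^esub> K) = n}"
        by (rule cQ_eq)
      also have "\<dots> \<le> card {H. counted k H G \<and> card (rcosets\<^bsub>G\<^esub> H) = n}"
        by (rule card_mono[OF G.fin_FG[OF rk that]]) auto
      also have "\<dots> = sub_count G k n" unfolding sub_count_def ..
      finally show ?thesis .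
    qed
    have up: "sub_count G k n \<le> B * (\<Sum>s\<in>{1..t}. if s dvd n then sub_count (G Mod T) k (n div s) else 0)"
      if "1 \<le> n" for n
    proof -
      have "sub_count G k n \<le> B * (\<Sum>s\<in>{s\<in>{1..t}. s dvd n}. sub_count (G Mod T) k (n div s))"
        using G.main_ineq[OF rk T fT that, of k] unfolding cQ_eq B_def t_def .
      also have "(\<Sum>s\<in>{s\<in>{1..t}. s dvd n}. sub_count (G Mod T) k (n div s))
          = (\<Sum>s\<in>{1..t}. if s dvd n then sub_count (G Mod T) k (n div s) else 0)"
        by (rule sum.inter_filter) simp
      finally show ?thesis .
    qed
    have SQG: "(\<Sum>i\<in>{1..N}. sub_count (G Mod T) k i) \<le> (\<Sum>i\<in>{1..N}. sub_count G k i)" for N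
      by (rule sum_mono) (use low in auto)
    have SGQ: "(\<Sum>i\<in>{1..N}. sub_count G k i) \<le> B * t * (\<Sum>i\<in>{1..N}. sub_count (G Mod T) k i)" for N
    proof -
      have "(\<Sum>i\<in>{1..N}. sub_count G k i) \<le> (\<Sum>i\<in>{1..N}. B * (\<Sum>s\<in>{1..t}. if s dvd i then sub_count (G Mod T) k (i div s) else 0))"
        by (rule sum_mono) (use up in auto)
      also have "\<dots> = B * (\<Sum>s\<in>{1..t}. \<Sum>i\<in>{1..N}. if s dvd i then sub_count (G Mod T) k (i div s) else 0)"
        unfolding sum_distrib_left[symmetric] by (subst sum.swap) (rule refl)
      also have "\<dots> \<le> B * (\<Sum>s\<in>{1..t}. \<Sum>i\<in>{1..N}. sub_count (G Mod T) k i)"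
        by (intro mult_left_mono sum_mono sum_div_bound) auto
      also have "\<dots> = B * t * (\<Sum>i\<in>{1..N}. sub_count (G Mod T) k i)" by simp
      finally show ?thesis .
    qed
    have SQGr: "real (\<Sum>i\<in>{1..N}. sub_count (G Mod T) k i) \<le> real (\<Sum>i\<in>{1..N}. sub_count G k i)" for N
      using SQG[of N] by linarith
    have SGQr: "real (\<Sum>i\<in>{1..N}. sub_count G k i) \<le> real B * real t * real (\<Sum>i\<in>{1..N}. sub_count (G Mod T) k i)" for N
    proof -
      have "real (\<Sum>i\<in>{1..N}. sub_count G k i) \<le> real (B * t * (\<Sum>i\<in>{1..N}. sub_count (G Mod T) k i))"
        using SGQ[of N] by linarith
      thus ?thesis by simp
    qed
    have Bt: "0 < real B * real t" using B1 t1 by simp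
    have eqv: "(\<exists>c>0. \<forall>n::nat. real (\<Sum>i\<in>{1..n}. sub_count G k i) \<le> c * real n powr a)
       \<longleftrightarrow> (\<exists>c>0. \<forall>n::nat. real (\<Sum>i\<in>{1..n}. sub_count (G Mod T) k i) \<le> c * real n powr a)" for a :: real
    proof
      assume "\<exists>c>0. \<forall>n::nat. real (\<Sum>i\<in>{1..n}. sub_count G k i) \<le> c * real n powr a"
      then obtain c where c: "c > 0" "\<forall>n::nat. real (\<Sum>i\<in>{1..n}. sub_count G k i) \<le> c * real n powr a" by blast
      show "\<exists>c>0. \<forall>n::nat. real (\<Sum>i\<in>{1..n}. sub_count (G Mod T) k i) \<le> c * real n powr a"
        using c SQGr order_trans by blast
    next
      assume "\<exists>c>0. \<forall>n::nat. real (\<Sum>i\<in>{1..n}. sub_count (G Mod T) k i) \<le> c * real n powr a"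
      then obtain c where c: "c > 0" "\<forall>n::nat. real (\<Sum>i\<in>{1..n}. sub_count (G Mod T) k i) \<le> c * real n powr a" by blast
      have "\<forall>n::nat. real (\<Sum>i\<in>{1..n}. sub_count G k i) \<le> (real B * real t * c) * real n powr a"
      proof
        fix n :: nat
        have "real (\<Sum>i\<in>{1..n}. sub_count G k i) \<le> real B * real t * real (\<Sum>i\<in>{1..n}. sub_count (G Mod T) k i)"
          by (rule SGQr)
        also have "\<dots> \<le> real B * real t * (c * real n powr a)"
          using c(2) Bt by (intro mult_left_mono) auto
        finally show "real (\<Sum>i\<in>{1..n}. sub_count G k i) \<le> (real B * real t * c) * real n powr a"
          by (simp add: mult.assoc)
      qed
      moreover have "real B * real t * c > 0" using Bt c(1) by simp
      ultimately show "\<exists>c>0. \<forall>n::nat. real (\<Sum>i\<in>{1..n}. sub_count G k i) \<le> c * real n powr a" by blast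
    qed
    thus "growth_alpha G k = growth_alpha (G Mod T) k" unfolding growth_alpha_def by (simp only: eqv)
    next
    fix k
    have cQ_eq: "sub_count (G Mod T) k n = card {K. counted k K G \<and> T \<subseteq> K \<and> card (rcosets\<^bsub>G\<^esub> K) = n}" for n
      using G.sub_count_quot[OF T] .
    {
      fix p :: nat assume p: "Factorial_Ring.prime p \<and> \<not> p dvd card T"
      have "sub_count G k (p ^ j) = sub_count (G Mod T) k (p ^ j)" for j
      proof -
        have "{H. counted k H G \<and> card (rcosets\<^bsub>G\<^esub> H) = p ^ j} = {K. counted k K G \<and> T \<subseteq> K \<and> card (rcosets\<^bsub>G\<^esub> K) = p ^ j}"
          using G.contain_T[OF T fT _ conjunct1[OF p] conjunct2[OF p]] G.counted_subgroup by blast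
        thus ?thesis using cQ_eq[of "p ^ j"] unfolding sub_count_def by simp
      qed
      hence "zeta_local G k p = zeta_local (G Mod T) k p" unfolding zeta_local_def by simp
    }
    thus "\<And>p. Factorial_Ring.prime p \<and> \<not> p dvd card T \<Longrightarrow> zeta_local G k p = zeta_local (G Mod T) k p" by blast
  qed
qed


end
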